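(* Let $\Gamma$ be the integer Heisenberg group, with elements written $(a,b,c)$, and let $p\ge2$ be a prime. The map $\varphi_p(a,b,c)=(pa,pb,p^2c)$ is an injective homomorphism $\Gamma\to\Gamma$, and the chain $\Gamma_\ell=\varphi_p^\ell(\Gamma)=\{(p^\ell a,p^\ell b,p^{2\ell}c):a,b,c\in\mathbb{Z}\}$ satisfies: the normal core of $\Gamma_\ell$ is $C_\ell=\{(p^{2\ell}a,p^{2\ell}b,p^{2\ell}c)\}$; the profinite completion $\widehat{\Gamma}_\infty=\varprojlim\Gamma/C_\ell$ has Steinitz order $p^\infty$; and although each quotient $\Gamma_\ell/C_\ell$ is nontrivial for $\ell>0$, the discriminant $D_\infty=\varprojlim\Gamma_\ell/C_\ell$ is the trivial group.
   Context: The integer Heisenberg group consists of the matrices $\begin{pmatrix}1&a&c\\0&1&b\\0&0&1\end{pmatrix}$, $a,b,c\in\mathbb{Z}$, denoted $(a,b,c)$; the product is $(a,b,c)(a',b',c')=(a+a',b+b',c+c'+ab')$. The normal core of a subgroup $H$ is $\bigcap_{g\in\Gamma}gHg^{-1}$. For a descending chain $\Gamma_\ell$ of finite-index subgroups with cores $C_\ell$, the discriminant is $D_\infty=\varprojlim\{\Gamma_{\ell+1}/C_{\ell+1}\to\Gamma_\ell/C_\ell\}\subset\widehat{\Gamma}_\infty$, with the maps induced by inclusion. The Steinitz order of a profinite group $\mathfrak{G}$ is $\mathrm{lcm}\{\#\mathfrak{G}/\mathfrak{N}:\mathfrak{N}\text{ open normal}\}$ as a supernatural number. *)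

theory Defs
  imports "HOL-Algebra.Algebra" "HOL-Computational_Algebra.Primes" "HOL-Library.Extended_Nat"
begin

definition heis_mult :: "int \<times> int \<times> int \<Rightarrow> int \<times> int \<times> int \<Rightarrow> int \<times> int \<times> int" where
  "heis_mult x y = (case x of (a,b,c) \<Rightarrow> case y of (u,v,w) \<Rightarrow> (a+u, b+v, c+w+a*v))"

definition heis :: "(int \<times> int \<times> int) monoid" where
  "heis = \<lparr>carrier = UNIV, monoid.mult = heis_mult, one = (0,0,0)\<rparr>"

definition heis_phi :: "nat \<Rightarrow> int \<times> int \<times> int \<Rightarrow> int \<times> int \<times> int" where
  "heis_phi p x = (case x of (a,b,c) \<Rightarrow> (int p * a, int p * b, int p ^ 2 * c))"

definition heis_chain :: "nat \<Rightarrow> nat \<Rightarrow> (int \<times> int \<times> int) set" where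
  "heis_chain p l = (heis_phi p ^^ l) ` carrier heis"

definition normal_core :: "('a, 'b) monoid_scheme \<Rightarrow> 'a set \<Rightarrow> 'a set" where
  "normal_core G H = (\<Inter>g\<in>carrier G. (g <#\<^bsub>G\<^esub> H) #>\<^bsub>G\<^esub> inv\<^bsub>G\<^esub> g)"

text \<open>Inverse limit of the quotients G / N l along the maps G/N(l+1) -> G/N l,
  g N(l+1) |-> g N l (for a descending chain of normal subgroups N l), realised as
  compatible sequences of cosets with pointwise (coset) multiplication.\<close>
definition invlim :: "('a, 'b) monoid_scheme \<Rightarrow> (nat \<Rightarrow> 'a set) \<Rightarrow> (nat \<Rightarrow> 'a set) monoid" where
  "invlim G N = \<lparr>carrier = {f. \<forall>l. f l \<in> rcosets\<^bsub>G\<^esub> (N l) \<and>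
                                 (\<forall>g\<in>f (Suc l). f l = N l #>\<^bsub>G\<^esub> g)},
                 monoid.mult = (\<lambda>f h l. f l <#>\<^bsub>G\<^esub> h l),
                 one = (\<lambda>l. N l)\<rparr>"

definition invlim_proj_kernel :: "('a, 'b) monoid_scheme \<Rightarrow> (nat \<Rightarrow> 'a set) \<Rightarrow> nat \<Rightarrow> (nat \<Rightarrow> 'a set) set" where
  "invlim_proj_kernel G N l = {f \<in> carrier (invlim G N). f l = N l}"

text \<open>Open normal subgroups of the inverse limit (inverse-limit topology: a subgroup is open
  iff it contains the kernel of some projection).\<close>
definition open_normal_subgroups :: "('a, 'b) monoid_scheme \<Rightarrow> (nat \<Rightarrow> 'a set) \<Rightarrow> (nat \<Rightarrow> 'a set) set set" where
  "open_normal_subgroups G N = {M. M \<lhd> invlim G N \<and> (\<exists>l. invlim_proj_kernel G N l \<subseteq> M)}"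

text \<open>Steinitz order as a supernatural number, given by its exponent at each prime q:
  lcm of the indices #(Ghat/M) over open normal subgroups M.\<close>
definition steinitz_exponent :: "('a, 'b) monoid_scheme \<Rightarrow> (nat \<Rightarrow> 'a set) \<Rightarrow> nat \<Rightarrow> enat" where
  "steinitz_exponent G N q =
     (SUP M\<in>open_normal_subgroups G N. enat (multiplicity q (card (rcosets\<^bsub>invlim G N\<^esub> M))))"

text \<open>The discriminant: inverse limit of Gamma_l / C_l along inclusion-induced maps,
  seen inside the inverse limit of Gamma / C_l.\<close>
definition discriminant :: "('a, 'b) monoid_scheme \<Rightarrow> (nat \<Rightarrow> 'a set) \<Rightarrow> (nat \<Rightarrow> 'a set) \<Rightarrow> (nat \<Rightarrow> 'a set) set" where
  "discriminant G H N = {f \<in> carrier (invlim G N). \<forall>l. \<exists>g\<in>H l. f l = N l #>\<^bsub>G\<^esub> g}"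

end

theory Submission
  imports Defs
begin


lemma heis_mult_simp[simp]: "heis_mult (a,b,c) (u,v,w) = (a+u, b+v, c+w+a*v)"
  by (simp add: heis_mult_def)

lemma heis_simps[simp]: "carrier heis = UNIV" "monoid.mult heis = heis_mult" "one heis = (0,0,0)"
  by (simp_all add: heis_def)

lemma group_heis: "group heis"
proof (rule groupI)
  fix x y z :: "int\<times>int\<times>int"
  show "x \<otimes>\<^bsub>heis\<^esub> y \<otimes>\<^bsub>heis\<^esub> z = x \<otimes>\<^bsub>heis\<^esub> (y \<otimes>\<^bsub>heis\<^esub> z)"
    by (cases x; cases y; cases z) (simp add: algebra_simps)
next
  fix x :: "int\<times>int\<times>int"
  obtain a b c where "x = (a,b,c)" by (cases x)
  thus "\<exists>y\<in>carrier heis. y \<otimes>\<^bsub>heis\<^esub> x = \<one>\<^bsub>heis\<^esub>"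
    by (intro bexI[of _ "(-a,-b,-c+a*b)"]) auto
qed auto

lemma heis_inv[simp]: "inv\<^bsub>heis\<^esub> (a,b,c) = (-a,-b,-c+a*b)"
  by (rule group.inv_equality[OF group_heis]) (auto simp: algebra_simps)

lemma phi_hom: "heis_phi p \<in> hom heis heis"
  by (rule homI) (auto simp: heis_phi_def power2_eq_square algebra_simps split: prod.splits)

lemma phi_inj: "p > 0 \<Longrightarrow> inj (heis_phi p)"
  by (auto simp: inj_def heis_phi_def split: prod.splits)

lemma phi_pow: "(heis_phi p ^^ l) (a,b,c) = (int p ^ l * a, int p ^ l * b, int p ^ (2*l) * c)"
  by (induction l) (auto simp: heis_phi_def power2_eq_square algebra_simps mult_2 power_add)

lemma chain_eq: "heis_chain p l = {(int p ^ l * a, int p ^ l * b, int p ^ (2*l) * c) | a b c. True}"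
proof -
  have "(heis_phi p ^^ l) ` UNIV = (\<lambda>(a,b,c). (heis_phi p ^^ l) (a,b,c)) ` UNIV" by auto
  thus ?thesis by (auto simp: heis_chain_def phi_pow image_iff)
qed

definition Cs :: "nat \<Rightarrow> nat \<Rightarrow> (int\<times>int\<times>int) set" where
  "Cs p l = {(x,y,z). int p^(2*l) dvd x \<and> int p^(2*l) dvd y \<and> int p^(2*l) dvd z}"

lemma Cs_eq: "Cs p l = {(int p ^ (2*l) * a, int p ^ (2*l) * b, int p ^ (2*l) * c) | a b c. True}"
  by (auto simp: Cs_def elim!: dvdE)

lemma chain_dvd: "heis_chain p l = {(x,y,z). int p^l dvd x \<and> int p^l dvd y \<and> int p^(2*l) dvd z}"
  by (auto simp: chain_eq elim!: dvdE)

lemma conj_eq: "heis_mult (heis_mult (x,y,z) (a,b,c)) (-x,-y,-z+x*y) = (a,b,c+x*b-a*y)"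
  by (simp add: algebra_simps)

lemma core_eq: "normal_core heis (heis_chain p l) = Cs p l"
proof -
  let ?P = "int p^(2*l)"
  have cj: "(g <#\<^bsub>heis\<^esub> H) #>\<^bsub>heis\<^esub> inv\<^bsub>heis\<^esub> g = (\<lambda>h. heis_mult (heis_mult g h) (inv\<^bsub>heis\<^esub> g)) ` H" for g H
    by (auto simp: l_coset_def r_coset_def)
  have mem: "t \<in> normal_core heis H \<longleftrightarrow> (\<forall>x y z. \<exists>a b c. (a,b,c) \<in> H \<and> t = (a,b,c+x*b-a*y))" for t H
  proof -
    have e: "(\<exists>h\<in>H. t = heis_mult (heis_mult (x,y,z) h) (inv\<^bsub>heis\<^esub> (x,y,z))) \<longleftrightarrow> (\<exists>a b c. (a,b,c) \<in> H \<and> t = (a,b,c+x*b-a*y))" for x y z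
      proof -
        have sb: "(\<exists>h\<in>H. P h) \<longleftrightarrow> (\<exists>a b c. (a,b,c) \<in> H \<and> P (a,b,c))" for P :: "int\<times>int\<times>int \<Rightarrow> bool"
          by auto
        show ?thesis by (simp only: sb heis_inv conj_eq)
      qed
    have "t \<in> normal_core heis H \<longleftrightarrow> (\<forall>g. \<exists>h\<in>H. t = heis_mult (heis_mult g h) (inv\<^bsub>heis\<^esub> g))"
      unfolding normal_core_def cj by (simp add: image_iff del: heis_inv)
    also have "\<dots> \<longleftrightarrow> (\<forall>x y z. \<exists>h\<in>H. t = heis_mult (heis_mult (x,y,z) h) (inv\<^bsub>heis\<^esub> (x,y,z)))"
      by (simp only: split_paired_All)
    also have "\<dots> \<longleftrightarrow> (\<forall>x y z. \<exists>a b c. (a,b,c) \<in> H \<and> t = (a,b,c+x*b-a*y))"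
      by (simp only: e) simp
    finally show ?thesis .
  qed
  show ?thesis
  proof (rule Set.set_eqI)
    fix t :: "int\<times>int\<times>int"
    obtain t1 t2 t3 where t: "t = (t1,t2,t3)" by (cases t)
    show "t \<in> normal_core heis (heis_chain p l) \<longleftrightarrow> t \<in> Cs p l"
    proof
      assume "t \<in> normal_core heis (heis_chain p l)"
      hence h0: "\<forall>x y z. \<exists>a b c. (a,b,c) \<in> heis_chain p l \<and> t = (a,b,c+x*b-a*y)" by (rule mem[THEN iffD1])
      note h = h0[rule_format]
      obtain a b c where 0: "(a,b,c) \<in> heis_chain p l" "t = (a,b,c+0*b-a*0)" using h[of 0 0] by blast
      obtain a1 b1 c1 where 1: "(a1,b1,c1) \<in> heis_chain p l" "t = (a1,b1,c1+1*b1-a1*0)" using h[of 1 0] by blast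
      obtain a2 b2 c2 where 2: "(a2,b2,c2) \<in> heis_chain p l" "t = (a2,b2,c2+0*b2-a2*1)" using h[of 0 1] by blast
      have "?P dvd t3" using 0 t by (auto simp: chain_dvd)
      moreover have "?P dvd c1" and "t2 = b1" and "t3 = c1 + b1" using 1 t by (auto simp: chain_dvd)
      hence "t2 = t3 - c1" by simp
      hence "?P dvd t2" using \<open>?P dvd t3\<close> \<open>?P dvd c1\<close> by (simp add: dvd_diff)
      moreover have "?P dvd c2" and "t1 = a2" and "t3 = c2 - a2" using 2 t by (auto simp: chain_dvd)
      hence "t1 = c2 - t3" by simp
      hence "?P dvd t1" using \<open>?P dvd t3\<close> \<open>?P dvd c2\<close> by (simp add: dvd_diff)
      ultimately show "t \<in> Cs p l" using t by (auto simp: Cs_def)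
    next
      assume "t \<in> Cs p l"
      hence d: "?P dvd t1" "?P dvd t2" "?P dvd t3" using t by (auto simp: Cs_def)
      have pl: "int p ^ l dvd ?P" by (simp add: le_imp_power_dvd)
      have e1: "int p^l dvd t1" "int p^l dvd t2" using pl d dvd_trans by blast+
      have e3: "?P dvd t3 - x*t2 + t1*y" for x y using d by simp
      show "t \<in> normal_core heis (heis_chain p l)"
      proof (rule mem[THEN iffD2], intro allI)
        fix x y z :: int
        have "(t1, t2, t3 - x*t2 + t1*y) \<in> heis_chain p l" using e1 e3 by (simp add: chain_dvd)
        moreover have "t = (t1, t2, (t3 - x*t2 + t1*y) + x * t2 - t1 * y)" using t by simp
        ultimately show "\<exists>a b c. (a, b, c) \<in> heis_chain p l \<and> t = (a, b, c + x * b - a * y)"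
          by blast
      qed
    qed
  qed
qed



lemma invlim_simps[simp]:
  "monoid.mult (invlim G N) = (\<lambda>f h l. f l <#>\<^bsub>G\<^esub> h l)"
  "one (invlim G N) = (\<lambda>l. N l)"
  by (simp_all add: invlim_def)

lemma invlim_carrier:
  assumes G: "group G" and N: "\<And>l. N l \<lhd> G"
  shows "f \<in> carrier (invlim G N) \<longleftrightarrow> (\<forall>l. f l \<in> rcosets\<^bsub>G\<^esub> (N l) \<and> f (Suc l) \<subseteq> f l)"
proof -
  have sg: "subgroup (N l) G" for l using N normal_imp_subgroup by blast
  have *: "(\<forall>g\<in>f (Suc l). f l = N l #>\<^bsub>G\<^esub> g) \<longleftrightarrow> f (Suc l) \<subseteq> f l"
    if r: "f l \<in> rcosets\<^bsub>G\<^esub> (N l)" "f (Suc l) \<in> rcosets\<^bsub>G\<^esub> (N (Suc l))" for l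
  proof
    have sub: "f (Suc l) \<subseteq> carrier G" using subgroup.rcosets_carrier[OF sg G r(2)] .
    assume h: "\<forall>g\<in>f (Suc l). f l = N l #>\<^bsub>G\<^esub> g"
    show "f (Suc l) \<subseteq> f l"
    proof
      fix x assume x: "x \<in> f (Suc l)"
      hence "x \<in> N l #>\<^bsub>G\<^esub> x" using sub group.rcos_self[OF G _ sg] by blast
      thus "x \<in> f l" using h x by simp
    qed
  next
    assume s: "f (Suc l) \<subseteq> f l"
    obtain a where a: "a \<in> carrier G" "f l = N l #>\<^bsub>G\<^esub> a" using r(1) unfolding RCOSETS_def by blast
    show "\<forall>g\<in>f (Suc l). f l = N l #>\<^bsub>G\<^esub> g"
    proof
      fix g assume "g \<in> f (Suc l)"
      hence "g \<in> N l #>\<^bsub>G\<^esub> a" using s a by blast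
      thus "f l = N l #>\<^bsub>G\<^esub> g" using group.repr_independence[OF G _ a(1) sg] a by blast
    qed
  qed
  show ?thesis unfolding invlim_def using * by auto
qed

locale invsys =
  fixes G :: "('a, 'b) monoid_scheme" and N :: "nat \<Rightarrow> 'a set"
  assumes G: "group G" and N: "\<And>l. N l \<lhd> G" and dec: "\<And>l. N (Suc l) \<subseteq> N l"
begin

lemma sg: "subgroup (N l) G" using N normal_imp_subgroup by blast

lemma carr: "f \<in> carrier (invlim G N) \<longleftrightarrow> (\<forall>l. f l \<in> rcosets\<^bsub>G\<^esub> (N l) \<and> f (Suc l) \<subseteq> f l)"
  using invlim_carrier[OF G N] .

lemma setmult_mono: "A \<subseteq> A' \<Longrightarrow> B \<subseteq> B' \<Longrightarrow> A <#>\<^bsub>G\<^esub> B \<subseteq> A' <#>\<^bsub>G\<^esub> B'"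
  unfolding set_mult_def by blast

lemma setinv_mono: "A \<subseteq> A' \<Longrightarrow> set_inv\<^bsub>G\<^esub> A \<subseteq> set_inv\<^bsub>G\<^esub> A'"
  unfolding SET_INV_def by blast

lemma grp: "group (invlim G N)"
proof (rule groupI)
  fix x y assume x: "x \<in> carrier (invlim G N)" and y: "y \<in> carrier (invlim G N)"
  show "x \<otimes>\<^bsub>invlim G N\<^esub> y \<in> carrier (invlim G N)"
    using x y unfolding carr by (simp add: normal.setmult_closed[OF N] setmult_mono)
next
  show "\<one>\<^bsub>invlim G N\<^esub> \<in> carrier (invlim G N)"
    unfolding carr using subgroup.subgroup_in_rcosets[OF sg G] dec by simp
next
  fix x y z assume x: "x \<in> carrier (invlim G N)" and y: "y \<in> carrier (invlim G N)"
    and z: "z \<in> carrier (invlim G N)"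
  show "x \<otimes>\<^bsub>invlim G N\<^esub> y \<otimes>\<^bsub>invlim G N\<^esub> z = x \<otimes>\<^bsub>invlim G N\<^esub> (y \<otimes>\<^bsub>invlim G N\<^esub> z)"
    using x y z unfolding carr by (simp add: fun_eq_iff) (metis normal.rcosets_assoc[OF N])
next
  fix x assume x: "x \<in> carrier (invlim G N)"
  show "\<one>\<^bsub>invlim G N\<^esub> \<otimes>\<^bsub>invlim G N\<^esub> x = x"
    using x unfolding carr by (simp add: fun_eq_iff normal.rcosets_mult_eq[OF N])
next
  fix x assume x: "x \<in> carrier (invlim G N)"
  show "\<exists>y\<in>carrier (invlim G N). y \<otimes>\<^bsub>invlim G N\<^esub> x = \<one>\<^bsub>invlim G N\<^esub>"
  proof (intro bexI)
    show "(\<lambda>l. set_inv\<^bsub>G\<^esub> (x l)) \<otimes>\<^bsub>invlim G N\<^esub> x = \<one>\<^bsub>invlim G N\<^esub>"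
      using x unfolding carr by (simp add: fun_eq_iff normal.rcosets_inv_mult_group_eq[OF N])
    show "(\<lambda>l. set_inv\<^bsub>G\<^esub> (x l)) \<in> carrier (invlim G N)"
      using x unfolding carr by (simp add: setinv_mono normal.setinv_closed[OF N])
  qed
qed

lemma proj_hom: "(\<lambda>f. f l) \<in> hom (invlim G N) (G Mod N l)"
  by (rule homI) (auto simp: carr FactGroup_def)

lemma proj_surj: "(\<lambda>f. f l) ` carrier (invlim G N) = carrier (G Mod N l)"
proof
  show "(\<lambda>f. f l) ` carrier (invlim G N) \<subseteq> carrier (G Mod N l)"
    by (auto simp: carr FactGroup_def)
next
  show "carrier (G Mod N l) \<subseteq> (\<lambda>f. f l) ` carrier (invlim G N)"
  proof
    fix XX assume "XX \<in> carrier (G Mod N l)"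
    then obtain g where g: "g \<in> carrier G" "XX = N l #>\<^bsub>G\<^esub> g"
      by (auto simp: FactGroup_def RCOSETS_def)
    have "(\<lambda>m. N m #>\<^bsub>G\<^esub> g) \<in> carrier (invlim G N)"
      unfolding carr using g dec by (auto simp: RCOSETS_def r_coset_def)
    thus "XX \<in> (\<lambda>f. f l) ` carrier (invlim G N)" using g by force
  qed
qed

lemma ghom: "group_hom (invlim G N) (G Mod N l) (\<lambda>f. f l)"
  using grp normal.factorgroup_is_group[OF N] proj_hom
  by (simp add: group_hom_def group_hom_axioms_def)

lemma kernel_eq: "kernel (invlim G N) (G Mod N l) (\<lambda>f. f l) = invlim_proj_kernel G N l"
  by (simp add: kernel_def invlim_proj_kernel_def)

lemma kernel_normal: "invlim_proj_kernel G N l \<lhd> invlim G N"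
  using group_hom.normal_kernel[OF ghom] kernel_eq by metis

lemma card_kernel_cosets:
  "card (rcosets\<^bsub>invlim G N\<^esub> (invlim_proj_kernel G N l)) = card (rcosets\<^bsub>G\<^esub> (N l))"
proof -
  have "(\<lambda>XX. the_elem ((\<lambda>f. f l) ` XX)) \<in> iso (invlim G N Mod invlim_proj_kernel G N l) (G Mod N l)"
    using group_hom.FactGroup_iso_set[OF ghom proj_surj] kernel_eq by metis
  hence "order (invlim G N Mod invlim_proj_kernel G N l) = order (G Mod N l)"
    by (rule iso_same_order)
  thus ?thesis by (simp add: order_def FactGroup_def)
qed

lemma index_dvd:
  assumes M: "M \<lhd> invlim G N" and K: "invlim_proj_kernel G N l \<subseteq> M"
    and fin: "finite (rcosets\<^bsub>invlim G N\<^esub> (invlim_proj_kernel G N l))"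
  shows "card (rcosets\<^bsub>invlim G N\<^esub> M) dvd card (rcosets\<^bsub>invlim G N\<^esub> (invlim_proj_kernel G N l))"
proof -
  let ?I = "invlim G N" let ?K = "invlim_proj_kernel G N l"
  have KN: "?K \<lhd> ?I" by (rule kernel_normal)
  have Ksg: "subgroup ?K ?I" and Msg: "subgroup M ?I" using KN M normal_imp_subgroup by blast+
  have compat: "M #>\<^bsub>?I\<^esub> x = M #>\<^bsub>?I\<^esub> y"
    if xy: "x \<in> carrier ?I" "y \<in> carrier ?I" "?K #>\<^bsub>?I\<^esub> x = ?K #>\<^bsub>?I\<^esub> y" for x y
  proof -
    have "y \<in> ?K #>\<^bsub>?I\<^esub> y" using group.rcos_self[OF grp xy(2) Ksg] .
    moreover have "?K #>\<^bsub>?I\<^esub> x \<subseteq> M #>\<^bsub>?I\<^esub> x" using K unfolding r_coset_def by auto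
    ultimately have "y \<in> M #>\<^bsub>?I\<^esub> x" using xy(3) by auto
    thus ?thesis using group.repr_independence[OF grp _ xy(1) Msg] by blast
  qed
  obtain g where g: "g \<in> hom (?I Mod ?K) (?I Mod M)"
    and gx: "\<And>x. x \<in> carrier ?I \<Longrightarrow> g (?K #>\<^bsub>?I\<^esub> x) = M #>\<^bsub>?I\<^esub> x"
    using FactGroup_universal[OF normal.r_coset_hom_Mod[OF M] KN compat] by blast
  have Q: "group (?I Mod ?K)" by (rule normal.factorgroup_is_group[OF KN])
  have Q': "group (?I Mod M)" by (rule normal.factorgroup_is_group[OF M])
  have gh: "group_hom (?I Mod ?K) (?I Mod M) g"
    using Q Q' g by (simp add: group_hom_def group_hom_axioms_def)
  have surj: "g ` carrier (?I Mod ?K) = carrier (?I Mod M)"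
  proof
    show "g ` carrier (?I Mod ?K) \<subseteq> carrier (?I Mod M)" by (rule image_subsetI, rule hom_in_carrier[OF g])
    show "carrier (?I Mod M) \<subseteq> g ` carrier (?I Mod ?K)"
    proof
      fix XX assume "XX \<in> carrier (?I Mod M)"
      then obtain x where x: "x \<in> carrier ?I" "XX = M #>\<^bsub>?I\<^esub> x" by (auto simp: FactGroup_def RCOSETS_def)
      have "?K #>\<^bsub>?I\<^esub> x \<in> carrier (?I Mod ?K)" using x by (auto simp: FactGroup_def RCOSETS_def)
      moreover have "XX = g (?K #>\<^bsub>?I\<^esub> x)" using gx[OF x(1)] x(2) by simp
      ultimately show "XX \<in> g ` carrier (?I Mod ?K)" by (rule rev_image_eqI)
    qed
  qed
  let ?ker = "kernel (?I Mod ?K) (?I Mod M) g"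
  have "order ((?I Mod ?K) Mod ?ker) = order (?I Mod M)"
    by (rule iso_same_order[OF group_hom.FactGroup_iso_set[OF gh surj]])
  moreover have "card (rcosets\<^bsub>?I Mod ?K\<^esub> ?ker) * card ?ker = order (?I Mod ?K)"
    using group.lagrange[OF Q group_hom.subgroup_kernel[OF gh]] .
  ultimately have "order (?I Mod M) * card ?ker = order (?I Mod ?K)" by (simp add: order_def FactGroup_def)
  hence "order (?I Mod ?K) = order (?I Mod M) * card ?ker" by simp
  hence "order (?I Mod M) dvd order (?I Mod ?K)" by (rule dvdI)
  thus ?thesis by (simp add: order_def FactGroup_def)
qed

end



lemma Cs_normal: "Cs p l \<lhd> heis"
proof -
  let ?P = "int p^(2*l)"
  have sg: "subgroup (Cs p l) heis"
  proof (rule group.subgroupI[OF group_heis])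
    show "Cs p l \<subseteq> carrier heis" by simp
    show "Cs p l \<noteq> {}" by (auto simp: Cs_def)
  next
    fix h assume "h \<in> Cs p l"
    moreover obtain a b c where "h = (a,b,c)" by (cases h)
    ultimately show "inv\<^bsub>heis\<^esub> h \<in> Cs p l" by (auto simp: Cs_def)
  next
    fix h k assume "h \<in> Cs p l" "k \<in> Cs p l"
    moreover obtain a b c where "h = (a,b,c)" by (cases h)
    moreover obtain u v w where "k = (u,v,w)" by (cases k)
    ultimately show "h \<otimes>\<^bsub>heis\<^esub> k \<in> Cs p l" by (auto simp: Cs_def)
  qed
  show ?thesis
  proof (subst group.normal_inv_iff[OF group_heis], intro conjI sg ballI)
    fix g h :: "int\<times>int\<times>int" assume "h \<in> Cs p l"
    moreover obtain a b c where "h = (a,b,c)" by (cases h)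
    moreover obtain x y z where "g = (x,y,z)" by (cases g)
    ultimately have hc: "?P dvd a" "?P dvd b" "?P dvd c" and
       e: "g \<otimes>\<^bsub>heis\<^esub> h \<otimes>\<^bsub>heis\<^esub> inv\<^bsub>heis\<^esub> g = (a, b, c + x*b - a*y)"
      by (auto simp: Cs_def algebra_simps)
    show "g \<otimes>\<^bsub>heis\<^esub> h \<otimes>\<^bsub>heis\<^esub> inv\<^bsub>heis\<^esub> g \<in> Cs p l"
      unfolding e using hc by (simp add: Cs_def)
  qed
qed

lemma Cs_dec: "Cs p (Suc l) \<subseteq> Cs p l"
proof -
  have "int p ^ (2*l) dvd int p ^ (2 * Suc l)" by (simp add: le_imp_power_dvd)
  thus ?thesis unfolding Cs_def using dvd_trans by blast
qed

lemma invsys_Cs: "invsys heis (Cs p)"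
  by (simp add: invsys_def group_heis Cs_normal Cs_dec)

lemma Cs_coset: "Cs p l #>\<^bsub>heis\<^esub> (a,b,c) =
   {(u,v,w). u mod (int p^(2*l)) = a mod (int p^(2*l)) \<and> v mod (int p^(2*l)) = b mod (int p^(2*l))
       \<and> w mod (int p^(2*l)) = c mod (int p^(2*l))}"
proof -
  let ?P = "int p^(2*l)"
  show ?thesis
  proof (rule Set.set_eqI)
    fix t :: "int\<times>int\<times>int"
    obtain u v w where t: "t = (u,v,w)" by (cases t)
    have "t \<in> Cs p l #>\<^bsub>heis\<^esub> (a,b,c) \<longleftrightarrow> (\<exists>x y z. ?P dvd x \<and> ?P dvd y \<and> ?P dvd z \<and> t = (x + a, y + b, z + c + x * b))"
      by (auto simp: r_coset_def Cs_def)
    also have "\<dots> \<longleftrightarrow> ?P dvd u - a \<and> ?P dvd v - b \<and> ?P dvd w - c"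
    proof
      assume "\<exists>x y z. ?P dvd x \<and> ?P dvd y \<and> ?P dvd z \<and> t = (x + a, y + b, z + c + x * b)"
      then obtain x y z where "?P dvd x" "?P dvd y" "?P dvd z" "t = (x + a, y + b, z + c + x * b)" by blast
      thus "?P dvd u - a \<and> ?P dvd v - b \<and> ?P dvd w - c" using t by auto
    next
      assume h: "?P dvd u - a \<and> ?P dvd v - b \<and> ?P dvd w - c"
      have "?P dvd (w - c) - (u - a) * b" using h by simp
      moreover have "t = ((u - a) + a, (v - b) + b, ((w - c) - (u - a) * b) + c + (u - a) * b)" using t by simp
      ultimately show "\<exists>x y z. ?P dvd x \<and> ?P dvd y \<and> ?P dvd z \<and> t = (x + a, y + b, z + c + x * b)"
        using h by blast
    qed
    finally show "t \<in> Cs p l #>\<^bsub>heis\<^esub> (a,b,c) \<longleftrightarrow> t \<in> {(u,v,w). u mod ?P = a mod ?P \<and> v mod ?P = b mod ?P \<and> w mod ?P = c mod ?P}"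
      using t by (simp add: mod_eq_dvd_iff)
  qed
qed

lemma card_Cs_cosets:
  assumes "p > 0"
  shows "card (rcosets\<^bsub>heis\<^esub> (Cs p l)) = p ^ (6*l)"
proof -
  let ?P = "int p^(2*l)"
  define cls where "cls = (\<lambda>(a::int,b::int,c::int). {(u,v,w). u mod ?P = a mod ?P \<and> v mod ?P = b mod ?P \<and> w mod ?P = c mod ?P})"
  define S where "S = {0..<?P} \<times> {0..<?P} \<times> {0..<?P}"
  have Ppos: "?P > 0" using assms by simp
  have co: "Cs p l #>\<^bsub>heis\<^esub> g = cls g" for g
    by (cases g) (simp add: Cs_coset cls_def)
  have clsmod: "cls (a,b,c) = cls (a mod ?P, b mod ?P, c mod ?P)" for a b c
    by (simp add: cls_def)
  have "rcosets\<^bsub>heis\<^esub> (Cs p l) = cls ` UNIV" by (auto simp: RCOSETS_def co)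
  also have "\<dots> = cls ` S"
  proof
    show "cls ` UNIV \<subseteq> cls ` S"
    proof
      fix XX assume "XX \<in> cls ` UNIV"
      then obtain a b c where "XX = cls (a,b,c)" by auto
      hence "XX = cls (a mod ?P, b mod ?P, c mod ?P)" using clsmod by simp
      moreover have "(a mod ?P, b mod ?P, c mod ?P) \<in> S" using Ppos by (simp add: S_def)
      ultimately show "XX \<in> cls ` S" by blast
    qed
  qed auto
  finally have rc: "rcosets\<^bsub>heis\<^esub> (Cs p l) = cls ` S" .
  have inj: "inj_on cls S"
  proof (rule inj_onI)
    fix g g' assume g: "g \<in> S" and g': "g' \<in> S" and e: "cls g = cls g'"
    obtain a b c where gg: "g = (a,b,c)" by (cases g)
    obtain a' b' c' where gg': "g' = (a',b',c')" by (cases g')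
    have "g \<in> cls g" by (simp add: gg cls_def)
    hence "g \<in> cls g'" using e by simp
    hence "a mod ?P = a' mod ?P" "b mod ?P = b' mod ?P" "c mod ?P = c' mod ?P" by (simp_all add: gg gg' cls_def)
    moreover have "a mod ?P = a" "b mod ?P = b" "c mod ?P = c" using g gg by (simp_all add: S_def)
    moreover have "a' mod ?P = a'" "b' mod ?P = b'" "c' mod ?P = c'" using g' gg' by (simp_all add: S_def)
    ultimately show "g = g'" using gg gg' by simp
  qed
  have "card (rcosets\<^bsub>heis\<^esub> (Cs p l)) = card S" using rc card_image[OF inj] by simp
  also have "\<dots> = nat ?P ^ 3" by (simp add: S_def card_cartesian_product power3_eq_cube)
  also have "\<dots> = p ^ (6*l)" by (simp add: nat_power_eq power_mult[symmetric])
  finally show ?thesis .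
qed



lemma antimono_carrier:
  assumes "invsys G N" "f \<in> carrier (invlim G N)" "l \<le> m"
  shows "f m \<subseteq> f l"
proof -
  have "\<And>n. f (Suc n) \<subseteq> f n" using assms(2) invsys.carr[OF assms(1)] by blast
  thus ?thesis using lift_Suc_antimono_le[of f] assms(3) by blast
qed

theorem mainTheorem8:
  fixes p :: nat
  assumes "Factorial_Ring.prime p"
  shows "group heis
    \<and> heis_phi p \<in> hom heis heis \<and> inj (heis_phi p)
    \<and> (\<forall>l. heis_chain p l = {(int p ^ l * a, int p ^ l * b, int p ^ (2*l) * c) | a b c. True})
    \<and> (\<forall>l. normal_core heis (heis_chain p l)
            = {(int p ^ (2*l) * a, int p ^ (2*l) * b, int p ^ (2*l) * c) | a b c. True})
    \<and> (\<forall>q. Factorial_Ring.prime q \<longrightarrow>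
          steinitz_exponent heis (\<lambda>l. normal_core heis (heis_chain p l)) q
            = (if q = p then \<infinity> else 0))
    \<and> (\<forall>l>0. normal_core heis (heis_chain p l) \<subset> heis_chain p l)
    \<and> discriminant heis (heis_chain p) (\<lambda>l. normal_core heis (heis_chain p l))
        = {\<one>\<^bsub>invlim heis (\<lambda>l. normal_core heis (heis_chain p l))\<^esub>}"
proof -
  have p1: "p > 1" using assms prime_gt_1_nat by blast
  hence p0: "p > 0" by simp
  have Neq: "(\<lambda>l. normal_core heis (heis_chain p l)) = Cs p" by (simp add: fun_eq_iff core_eq)
  interpret S: invsys heis "Cs p" by (rule invsys_Cs)
  let ?I = "invlim heis (Cs p)"
  let ?K = "invlim_proj_kernel heis (Cs p)"
  let ?f = "\<lambda>M. enat (multiplicity q (card (rcosets\<^bsub>?I\<^esub> M)))" 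
  have cardK: "card (rcosets\<^bsub>?I\<^esub> (?K l)) = p ^ (6*l)" for l
    using S.card_kernel_cosets card_Cs_cosets[OF p0] by simp
  have KO: "?K l \<in> open_normal_subgroups heis (Cs p)" for l
    unfolding open_normal_subgroups_def using S.kernel_normal by blast
  have stein: "steinitz_exponent heis (Cs p) q = (if q = p then \<infinity> else 0)" if q: "Factorial_Ring.prime q" for q
  proof (cases "q = p")
    case True
    have le: "enat (6*l) \<le> steinitz_exponent heis (Cs p) q" for l
    proof -
      have "enat (multiplicity q (card (rcosets\<^bsub>?I\<^esub> (?K l)))) \<le> steinitz_exponent heis (Cs p) q"
        unfolding steinitz_exponent_def by (rule SUP_upper[OF KO])
      moreover have "multiplicity q (card (rcosets\<^bsub>?I\<^esub> (?K l))) = 6*l"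
        using True cardK assms by (simp add: prime_elem_multiplicity_power_distrib)
      ultimately show ?thesis by simp
    qed
    have "steinitz_exponent heis (Cs p) q = \<infinity>"
    proof (cases "steinitz_exponent heis (Cs p) q")
      case (enat n)
      have "enat (6 * Suc n) \<le> enat n" using le[of "Suc n"] enat by simp
      thus ?thesis by simp
    qed simp
    thus ?thesis using True by simp
  next
    case False
    have z: "multiplicity q (card (rcosets\<^bsub>?I\<^esub> M)) = 0" if M: "M \<in> open_normal_subgroups heis (Cs p)" for M
    proof -
      obtain l where MN: "M \<lhd> ?I" and Kl: "?K l \<subseteq> M" using M unfolding open_normal_subgroups_def by blast
      have fin: "finite (rcosets\<^bsub>?I\<^esub> (?K l))" using cardK[of l] p0
        by (metis card.infinite nat_power_eq_Suc_0_iff neq0_conv not_gr0 power_not_zero zero_neq_one) 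
      have d: "card (rcosets\<^bsub>?I\<^esub> M) dvd p ^ (6*l)" using S.index_dvd[OF MN Kl fin] cardK by simp
      have "\<not> q dvd card (rcosets\<^bsub>?I\<^esub> M)"
      proof
        assume "q dvd card (rcosets\<^bsub>?I\<^esub> M)"
        hence "q dvd p ^ (6*l)" using d dvd_trans by blast
        hence "q dvd p" using q prime_dvd_power by blast
        thus False using primes_dvd_imp_eq[OF q assms] False by blast
      qed
      thus ?thesis by (rule not_dvd_imp_multiplicity_0)
    qed
    have "steinitz_exponent heis (Cs p) q = 0"
      unfolding steinitz_exponent_def
      using KO[of 0] by (simp add: z zero_enat_def[symmetric] SUP_constant) blast
    thus ?thesis using False by simp
  qed
  have strict: "Cs p l \<subset> heis_chain p l" if l: "l > 0" for l
  proof
    have pl: "int p ^ l dvd int p ^ (2*l)" by (simp add: le_imp_power_dvd)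
    show "Cs p l \<subseteq> heis_chain p l" unfolding Cs_def chain_dvd using pl dvd_trans by blast
    have "(int p ^ l, 0, 0) \<in> heis_chain p l" by (simp add: chain_dvd)
    moreover have "(int p ^ l, 0, 0) \<notin> Cs p l"
    proof
      assume "(int p ^ l, 0, 0) \<in> Cs p l"
      hence "int (p ^ (2*l)) dvd int (p ^ l)" by (simp add: Cs_def)
      hence "p ^ (2*l) dvd p ^ l" by (simp only: of_nat_dvd_iff)
      hence "p ^ (2*l) \<le> p ^ l" using p0 by (simp add: dvd_imp_le)
      moreover have "p ^ l < p ^ (2*l)" using p1 l by (simp add: power_strict_increasing_iff)
      ultimately show False by simp
    qed
    ultimately show "Cs p l \<noteq> heis_chain p l" by blast
  qed
  have disc: "discriminant heis (heis_chain p) (Cs p) = {\<one>\<^bsub>?I\<^esub>}"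
  proof
    show "discriminant heis (heis_chain p) (Cs p) \<subseteq> {\<one>\<^bsub>?I\<^esub>}"
    proof
      fix f assume fD: "f \<in> discriminant heis (heis_chain p) (Cs p)"
      hence fc: "f \<in> carrier ?I" and fh: "\<forall>l. \<exists>g\<in>heis_chain p l. f l = Cs p l #>\<^bsub>heis\<^esub> g"
        unfolding discriminant_def by blast+
      have "f l = Cs p l" for l
      proof -
        obtain g where g: "g \<in> heis_chain p (2*l)" and fg: "f (2*l) = Cs p (2*l) #>\<^bsub>heis\<^esub> g" using fh by blast
        have "g \<in> f (2*l)" unfolding fg using group.rcos_self[OF group_heis _ S.sg] by simp
        hence gl: "g \<in> f l" using antimono_carrier[OF invsys_Cs fc, of l "2*l"] by auto
        obtain a where a: "f l = Cs p l #>\<^bsub>heis\<^esub> a" using fc unfolding S.carr RCOSETS_def by blast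
        have "f l = Cs p l #>\<^bsub>heis\<^esub> g" using group.repr_independence[OF group_heis _ _ S.sg] gl a by simp
        moreover have "g \<in> Cs p l"
        proof -
          obtain x y z where xyz: "g = (x,y,z)" by (cases g)
          have "int p ^ (2*l) dvd x" "int p ^ (2*l) dvd y" "int p ^ (2*(2*l)) dvd z"
            using g xyz by (simp_all add: chain_dvd)
          moreover have "int p ^ (2*l) dvd int p ^ (2*(2*l))" by (simp add: le_imp_power_dvd)
          ultimately show ?thesis using xyz by (auto simp: Cs_def intro: dvd_trans)
        qed
        ultimately show ?thesis using subgroup.rcos_const[OF S.sg group_heis] by simp
      qed
      thus "f \<in> {\<one>\<^bsub>?I\<^esub>}" by (simp add: fun_eq_iff)
    qed
  next
    have "\<one>\<^bsub>?I\<^esub> \<in> carrier ?I" using group.is_monoid[OF S.grp] by (rule monoid.one_closed)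
    moreover have "\<forall>l. \<exists>g\<in>heis_chain p l. Cs p l = Cs p l #>\<^bsub>heis\<^esub> g"
    proof
      fix l
      have "(0,0,0) \<in> heis_chain p l" by (simp add: chain_dvd)
      moreover have "Cs p l #>\<^bsub>heis\<^esub> (0,0,0) = Cs p l"
        using group.coset_mult_one[OF group_heis] by (metis heis_simps(1) heis_simps(3) top_greatest)
      ultimately show "\<exists>g\<in>heis_chain p l. Cs p l = Cs p l #>\<^bsub>heis\<^esub> g" by metis
    qed
    ultimately show "{\<one>\<^bsub>?I\<^esub>} \<subseteq> discriminant heis (heis_chain p) (Cs p)"
      by (simp add: discriminant_def)
  qed
  show ?thesis
    apply (intro conjI allI impI)
           apply (rule group_heis)
          apply (rule phi_hom)
         apply (rule phi_inj[OF p0])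
        apply (rule chain_eq)
       apply (simp add: core_eq Cs_eq)
      apply (simp only: Neq stein)
     apply (simp add: core_eq strict)
    apply (simp only: Neq disc)
    done
qed

end
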